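(* For every simulation budget $T>0$, the function $w\mapsto \mathrm{APCS}(w)$ is concave on the open orthant $\{w=(w_1,\dots,w_k)\in\mathbb{R}^k : w_i>0 \text{ for all } i\in\mathcal{K}\}$. Consequently, maximizing $\mathrm{APCS}(w)$ subject to $\sum_{i\in\mathcal{K}} w_i=1$, $w_i> 0$ ($i\in\mathcal{K}$) is a convex optimization problem.
   Context: Let $k\ge 2$ and $\mathcal{K}=\{1,\dots,k\}$. For each $i\in\mathcal{K}$ fix real numbers $\mu_i$ and $\sigma_i>0$. Let $b\in\mathcal{K}$ be the unique index with $\mu_b<\mu_i$ for all $i\neq b$, and let $\mathcal{K}'=\mathcal{K}\setminus\{b\}$. Fix $T>0$. For $i\in\mathcal{K}'$ put $\delta_{i,b}=\mu_i-\mu_b>0$. For $w$ with all $w_i>0$ define $\sigma_{i,b}(w)=\sqrt{\sigma_i^2/(w_iT)+\sigma_b^2/(w_bT)}$ and $$\mathrm{APCS}(w)=1-\sum_{i\in\mathcal{K}'}\Phi\!\left(-\frac{\delta_{i,b}}{\sigma_{i,b}(w)}\right),$$ where $\Phi$ is the standard normal cumulative distribution function. *)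

theory Defs
  imports "HOL-Analysis.Analysis" "HOL-Probability.Probability"
begin

definition Phi :: "real \<Rightarrow> real" where
  "Phi x = (LINT t:{..x}|lborel. std_normal_density t)"

definition sigma_ib :: "('n::finite \<Rightarrow> real) \<Rightarrow> 'n \<Rightarrow> real \<Rightarrow> real ^ 'n \<Rightarrow> 'n \<Rightarrow> real" where
  "sigma_ib \<sigma> b T w i = sqrt ((\<sigma> i)\<^sup>2 / (w $ i * T) + (\<sigma> b)\<^sup>2 / (w $ b * T))"

definition APCS :: "('n::finite \<Rightarrow> real) \<Rightarrow> ('n \<Rightarrow> real) \<Rightarrow> 'n \<Rightarrow> real \<Rightarrow> real ^ 'n \<Rightarrow> real" where
  "APCS \<mu> \<sigma> b T w = 1 - (\<Sum>i\<in>UNIV - {b}. Phi (- ((\<mu> i - \<mu> b) / sigma_ib \<sigma> b T w i)))"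

end

theory Submission
  imports Defs
begin

lemma Phi_eq: "Phi u = (LBINT y=-\<infinity>..ereal u. std_normal_density y)"
  unfolding Phi_def interval_lebesgue_integral_def
  by (auto simp: einterval_eq_Iic intro!: set_integral_discrete_difference[where X="{u}"])

lemma Phi_split: "Phi u = (LBINT y=-\<infinity>..ereal 0. std_normal_density y) + (LBINT y=ereal 0..ereal u. std_normal_density y)"
  unfolding Phi_eq
  apply (subst interval_integral_sum[symmetric, where b="ereal 0"])
  apply (auto simp: interval_lebesgue_integrable_def set_integrable_def)
  using integrable_mult_indicator[OF borel_einterval[unfolded sets_lborel[symmetric]] integrable_normal_density]
  by auto

lemma Phi_deriv: "(Phi has_real_derivative std_normal_density x) (at x)"
proof -
  define a where "a = - (\<bar>x\<bar> + 1)"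
  define b where "b = \<bar>x\<bar> + 1"
  have c: "continuous_on {a..b} std_normal_density"
    unfolding std_normal_density_def by (intro continuous_intros) auto
  have "((\<lambda>u. LBINT y=ereal 0..ereal u. std_normal_density y) has_vector_derivative (std_normal_density x)) (at x within {a..b})"
    by (rule interval_integral_FTC2[OF _ _ c]) (auto simp: a_def b_def)
  then have "((\<lambda>u. LBINT y=ereal 0..ereal u. std_normal_density y) has_vector_derivative (std_normal_density x)) (at x)"
    by (subst (asm) at_within_interior[where x=x]) (auto simp: a_def b_def)
  then have "((\<lambda>u. (LBINT y=-\<infinity>..ereal 0. std_normal_density y) + (LBINT y=ereal 0..ereal u. std_normal_density y)) has_real_derivative (std_normal_density x)) (at x)"
    by (auto simp: has_real_derivative_iff_has_vector_derivative intro!: derivative_eq_intros)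
  then show ?thesis by (simp add: Phi_split[abs_def])
qed

lemma Phi_convex: "convex_on {..0} Phi"
proof (rule convex_on_realI[where f'=std_normal_density])
  show "connected {..0::real}" by simp
  show "\<And>x. (Phi has_real_derivative std_normal_density x) (at x)" by (rule Phi_deriv)
  fix x y :: real assume "x \<in> {..0}" "y \<in> {..0}" "x \<le> y"
  then have "y^2 \<le> x^2" by (simp add: power2_eq_square) (metis mult_le_cancel_left mult_le_cancel_right order.trans dual_order.trans mult_nonpos_nonpos less_eq_real_def mult_right_mono_neg)
  then show "std_normal_density x \<le> std_normal_density y"
    unfolding std_normal_density_def by (auto intro!: mult_left_mono divide_right_mono)
qed

lemma Phi_mono: "x \<le> y \<Longrightarrow> Phi x \<le> Phi y"
  by (rule DERIV_nonneg_imp_nondecreasing[where f=Phi]) (auto intro: Phi_deriv)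

lemma tangent_ineq:
  fixes a c u v x y :: real
  assumes "a > 0" "c > 0" "u > 0" "v > 0" "x > 0" "y > 0"
  shows "1 / (a/u + c/v) \<le> (a * u / x^2 + c * v / y^2) / (a/x + c/y)^2"
proof -
  have D: "a/x + c/y > 0" "a/u + c/v > 0" using assms by (auto intro!: add_pos_pos divide_pos_pos)
  have key: "(a/x + c/y)^2 \<le> (a/u + c/v) * (a * u / x^2 + c * v / y^2)"
  proof -
    have "(a/u + c/v) * (a * u / x^2 + c * v / y^2) - (a/x + c/y)^2
        = a * c*(v * x - u * y)^2 / (u * v * x^2 * y^2)"
      using assms by (simp add: field_simps power2_eq_square)
    also have "\<dots> \<ge> 0" using assms by simp
    finally show ?thesis by simp
  qed
  show ?thesis using D key
    by (simp add: field_simps)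
qed

lemma q_concave:
  fixes a c x1 y1 x2 y2 u v :: real
  assumes "a > 0" "c > 0" "x1 > 0" "y1 > 0" "x2 > 0" "y2 > 0" "u \<ge> 0" "v \<ge> 0" "u + v = 1"
  shows "u * (1 / (a/x1 + c/y1)) + v * (1 / (a/x2 + c/y2))
     \<le> 1 / (a/(u * x1 + v * x2) + c/(u * y1 + v * y2))"
proof -
  define x where "x = u * x1 + v * x2"
  define y where "y = u * y1 + v * y2"
  have xp: "x > 0" unfolding x_def using assms
    by (cases "u = 0") (auto intro: add_pos_nonneg simp: mult_pos_pos)
  have yp: "y > 0" unfolding y_def using assms
    by (cases "u = 0") (auto intro: add_pos_nonneg simp: mult_pos_pos)
  define D where "D = a/x + c/y"
  have Dp: "D > 0" unfolding D_def using assms xp yp by (auto intro!: add_pos_pos divide_pos_pos)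
  have t1: "1 / (a/x1 + c/y1) \<le> (a * x1/x^2 + c * y1/y^2) / D^2"
    unfolding D_def by (rule tangent_ineq) (use assms xp yp in auto)
  have t2: "1 / (a/x2 + c/y2) \<le> (a * x2/x^2 + c * y2/y^2) / D^2"
    unfolding D_def by (rule tangent_ineq) (use assms xp yp in auto)
  have "u * (1 / (a/x1 + c/y1)) + v * (1 / (a/x2 + c/y2))
      \<le> u * ((a * x1/x^2 + c * y1/y^2) / D^2) + v * ((a * x2/x^2 + c * y2/y^2) / D^2)"
    using t1 t2 assms by (intro add_mono mult_left_mono) auto
  also have "\<dots> = (a * (u * x1 + v * x2) / x^2 + c * (u * y1 + v * y2) / y^2) / D^2"
    using xp yp Dp by (simp add: field_simps power2_eq_square)
  also have "\<dots> = (a * x / x^2 + c * y / y^2) / D^2"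
    by (simp add: x_def y_def)
  also have "\<dots> = D / D^2" unfolding D_def using xp yp by (simp add: power2_eq_square)
  also have "\<dots> = 1 / D" using Dp by (simp add: power2_eq_square)
  finally show ?thesis unfolding D_def x_def y_def .
qed

lemma sqrt_concave_ineq:
  fixes p q u v :: real
  assumes "p \<ge> 0" "q \<ge> 0" "u \<ge> 0" "v \<ge> 0" "u + v = 1"
  shows "u * sqrt p + v * sqrt q \<le> sqrt (u * p + v * q)"
proof -
  have "(u * sqrt p + v * sqrt q)^2 \<le> u * p + v * q"
  proof -
    have v: "v = 1 - u" using assms by simp
    have "u * p + v * q - (u * sqrt p + v * sqrt q)^2 = u * v * (sqrt p - sqrt q)^2"
      using assms unfolding v by (simp add: power2_eq_square algebra_simps)
    also have "\<dots> \<ge> 0" using assms by simp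
    finally show ?thesis by simp
  qed
  then show ?thesis
    by (meson real_le_rsqrt)
qed

lemma h_concave:
  fixes a c x1 y1 x2 y2 u v :: real
  assumes "a > 0" "c > 0" "x1 > 0" "y1 > 0" "x2 > 0" "y2 > 0" "u \<ge> 0" "v \<ge> 0" "u + v = 1"
  shows "u * sqrt (1 / (a/x1 + c/y1)) + v * sqrt (1 / (a/x2 + c/y2))
     \<le> sqrt (1 / (a/(u * x1 + v * x2) + c/(u * y1 + v * y2)))"
proof -
  have "u * sqrt (1 / (a/x1 + c/y1)) + v * sqrt (1 / (a/x2 + c/y2))
     \<le> sqrt (u * (1 / (a/x1 + c/y1)) + v * (1 / (a/x2 + c/y2)))"
    using assms by (intro sqrt_concave_ineq) auto
  also have "\<dots> \<le> sqrt (1 / (a/(u * x1 + v * x2) + c/(u * y1 + v * y2)))"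
    using q_concave[OF assms] by simp
  finally show ?thesis .
qed

lemma orthant_convex: "convex {w :: real ^ 'n. \<forall>i. w $ i > 0}"
  unfolding convex_def
proof (intro ballI allI impI)
  fix x y :: "real ^ 'n" and u v :: real and i
  assume x: "x \<in> {w. \<forall>i. w $ i > 0}" and y: "y \<in> {w. \<forall>i. w $ i > 0}"
    and uv: "0 \<le> u" "0 \<le> v" "u + v = 1"
  show "u *\<^sub>R x + v *\<^sub>R y \<in> {w. \<forall>i. w $ i > 0}"
  proof (clarsimp)
    fix i
    have "x $ i > 0" "y $ i > 0" using x y by auto
    then show "0 < u * x $ i + v * y $ i" using uv
      by (cases "u = 0") (auto intro: add_pos_nonneg)
  qed
qed

lemma term_eq:
  fixes \<mu> \<sigma> :: "'n::finite \<Rightarrow> real" and b i :: 'n and T :: real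
  shows "(\<mu> i - \<mu> b) / sigma_ib \<sigma> b T w i
    = (\<mu> i - \<mu> b) * sqrt (1 / ((\<sigma> i)\<^sup>2 / T / (w $ i) + (\<sigma> b)\<^sup>2 / T / (w $ b)))"
  by (simp add: sigma_ib_def real_sqrt_divide divide_divide_eq_left mult.commute)

lemma term_convex:
  fixes \<mu> \<sigma> :: "'n::finite \<Rightarrow> real" and b i :: 'n and T :: real
  assumes "\<And>i. \<sigma> i > 0" "\<mu> b \<le> \<mu> i" "T > 0"
  shows "convex_on {w :: real ^ 'n. \<forall>i. w $ i > 0} (\<lambda>w. Phi (- ((\<mu> i - \<mu> b) / sigma_ib \<sigma> b T w i)))"
  unfolding convex_on_def
proof (intro conjI orthant_convex ballI allI impI)
  fix x y :: "real ^ 'n" and u v :: real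
  assume x: "x \<in> {w. \<forall>i. w $ i > 0}" and y: "y \<in> {w. \<forall>i. w $ i > 0}"
    and uv: "0 \<le> u" "0 \<le> v" "u + v = 1"
  define a where "a = (\<sigma> i)\<^sup>2 / T"
  define c where "c = (\<sigma> b)\<^sup>2 / T"
  define \<delta> where "\<delta> = \<mu> i - \<mu> b"
  have ap: "a > 0" "c > 0" unfolding a_def c_def using assms(1)[of i] assms(1)[of b] assms(3) by (auto intro!: divide_pos_pos)
  have d: "\<delta> \<ge> 0" unfolding \<delta>_def using assms by simp
  define H where "H w = sqrt (1 / (a / (w $ i) + c / (w $ b)))" for w :: "real ^ 'n"
  have eq: "(\<mu> i - \<mu> b) / sigma_ib \<sigma> b T w i = \<delta> * H w" for w
    unfolding term_eq H_def a_def c_def \<delta>_def ..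
  have Hc: "u * H x + v * H y \<le> H (u *\<^sub>R x + v *\<^sub>R y)"
    unfolding H_def using x y uv ap by (simp add: h_concave)
  have H0: "H x \<ge> 0" "H y \<ge> 0"
  proof -
    have "a / x $ i + c / x $ b > 0" "a / y $ i + c / y $ b > 0"
      using x y ap by (auto intro!: add_pos_pos divide_pos_pos)
    then show "H x \<ge> 0" "H y \<ge> 0" unfolding H_def by auto
  qed
  have "- (\<delta> * H (u *\<^sub>R x + v *\<^sub>R y)) \<le> u * (- (\<delta> * H x)) + v * (- (\<delta> * H y))"
  proof -
    have "\<delta> * (u * H x + v * H y) \<le> \<delta> * H (u *\<^sub>R x + v *\<^sub>R y)"
      using Hc d by (rule mult_left_mono)
    then show ?thesis by (simp add: algebra_simps)
  qed
  then have "Phi (- (\<delta> * H (u *\<^sub>R x + v *\<^sub>R y))) \<le> Phi (u * (- (\<delta> * H x)) + v * (- (\<delta> * H y)))"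
    by (rule Phi_mono)
  also have "\<dots> \<le> u * Phi (- (\<delta> * H x)) + v * Phi (- (\<delta> * H y))"
  proof -
    have "- (\<delta> * H x) \<in> {..0}" "- (\<delta> * H y) \<in> {..0}" using d H0 by auto
    then have "Phi ((1 - v) *\<^sub>R (- (\<delta> * H x)) + v *\<^sub>R (- (\<delta> * H y)))
       \<le> (1 - v) * Phi (- (\<delta> * H x)) + v * Phi (- (\<delta> * H y))"
      using uv by (intro convex_onD[OF Phi_convex]) auto
    moreover have "1 - v = u" using uv by simp
    ultimately show ?thesis by simp
  qed
  finally show "Phi (- ((\<mu> i - \<mu> b) / sigma_ib \<sigma> b T (u *\<^sub>R x + v *\<^sub>R y) i))
      \<le> u * Phi (- ((\<mu> i - \<mu> b) / sigma_ib \<sigma> b T x i)) + v * Phi (- ((\<mu> i - \<mu> b) / sigma_ib \<sigma> b T y i))"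
    unfolding eq .
qed

theorem lemma1:
  fixes \<mu> \<sigma> :: "'n::finite \<Rightarrow> real" and b :: 'n and T :: real
  assumes "CARD('n) \<ge> 2"
    and "\<And>i. \<sigma> i > 0"
    and "\<And>i. i \<noteq> b \<Longrightarrow> \<mu> b < \<mu> i"
    and "T > 0"
  shows "concave_on {w :: real ^ 'n. \<forall>i. w $ i > 0} (APCS \<mu> \<sigma> b T)
       \<and> convex {w :: real ^ 'n. (\<Sum>i\<in>UNIV. w $ i) = 1 \<and> (\<forall>i. w $ i > 0)}
       \<and> concave_on {w :: real ^ 'n. (\<Sum>i\<in>UNIV. w $ i) = 1 \<and> (\<forall>i. w $ i > 0)} (APCS \<mu> \<sigma> b T)"
proof -
  let ?S = "{w :: real ^ 'n. \<forall>i. w $ i > 0}"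
  let ?C = "{w :: real ^ 'n. (\<Sum>i\<in>UNIV. w $ i) = 1 \<and> (\<forall>i. w $ i > 0)}"
  define f where "f i w = Phi (- ((\<mu> i - \<mu> b) / sigma_ib \<sigma> b T w i))" for i w
  have fc: "convex_on ?S (f i)" if "i \<in> UNIV - {b}" for i
    unfolding f_def using that assms by (intro term_convex) (auto intro: less_imp_le)
  have A: "APCS \<mu> \<sigma> b T w = 1 - (\<Sum>i\<in>UNIV - {b}. f i w)" for w
    unfolding APCS_def f_def ..
  have conc: "concave_on ?S (APCS \<mu> \<sigma> b T)"
    unfolding concave_on_iff
  proof (intro conjI orthant_convex ballI allI impI)
    fix x y :: "real ^ 'n" and u v :: real
    assume x: "x \<in> ?S" and y: "y \<in> ?S" and uv: "0 \<le> u" "0 \<le> v" "u + v = 1"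
    have "(\<Sum>i\<in>UNIV - {b}. f i (u *\<^sub>R x + v *\<^sub>R y)) \<le> (\<Sum>i\<in>UNIV - {b}. u * f i x + v * f i y)"
      using fc x y uv by (intro sum_mono) (auto simp: convex_on_def)
    also have "\<dots> = u * (\<Sum>i\<in>UNIV - {b}. f i x) + v * (\<Sum>i\<in>UNIV - {b}. f i y)"
      by (simp add: sum.distrib sum_distrib_left)
    finally show "u * APCS \<mu> \<sigma> b T x + v * APCS \<mu> \<sigma> b T y \<le> APCS \<mu> \<sigma> b T (u *\<^sub>R x + v *\<^sub>R y)"
      unfolding A using uv by (simp add: algebra_simps)
  qed
  have cC: "convex ?C"
    unfolding convex_def
  proof (intro ballI allI impI)
    fix x y :: "real ^ 'n" and u v :: real
    assume x: "x \<in> ?C" and y: "y \<in> ?C" and uv: "0 \<le> u" "0 \<le> v" "u + v = 1"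
    have "u *\<^sub>R x + v *\<^sub>R y \<in> ?S"
      using orthant_convex[unfolded convex_def] x y uv by auto
    moreover have "(\<Sum>i\<in>UNIV. (u *\<^sub>R x + v *\<^sub>R y) $ i) = 1"
      using x y uv by (simp add: sum.distrib sum_distrib_left[symmetric])
    ultimately show "u *\<^sub>R x + v *\<^sub>R y \<in> ?C" by simp
  qed
  have "concave_on ?C (APCS \<mu> \<sigma> b T)"
    unfolding concave_on_def by (rule convex_on_subset[OF conc[unfolded concave_on_def] _ cC]) auto
  then show ?thesis using conc cC by simp
qed

end
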